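(* Let $(a_i)_{i=1}^n$, $a_i=(m_i,x_i,v_i)$, be a system of $n$ particles (as defined in the context) with sticky trajectories $\gamma_1,\dots,\gamma_n$. Let $P_0=(0,0)$ and $P_k=\left(\sum_{i=1}^k m_i,\ \sum_{i=1}^k m_i v_i\right)$ for $1\le k\le n$, let $f:[0,\sum_{i=1}^n m_i]\to\mathbb{R}$ be the continuous piecewise linear function whose graph is the union of the segments $[P_{k-1},P_k]$, and let $r$ be the convex envelope of $f$. Let $0=k_0<k_1<\cdots<k_\ell=n$ be all indices $k$ for which $P_k$ lies on the graph of $r$, and for $1\le j\le\ell$ let $T_j=\{a_i: k_{j-1}<i\le k_j\}$. Then for $i\neq j$, no particle of $T_i$ ever collides with a particle of $T_j$, i.e. $\gamma_p(t)\neq\gamma_q(t)$ for all $t\ge 0$ whenever $a_p\in T_i$, $a_q\in T_j$.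
   Context: A particle is a triple $a=(m,x,v)\in\mathbb{R}_{>0}\times\mathbb{R}\times\mathbb{R}$ (mass, initial position, initial velocity). A system of $n$ particles is an $n$-tuple $(a_i)_{i=1}^n$ with $x_i<x_j$ iff $i<j$. To each particle is associated a unique continuous piecewise linear trajectory $\gamma_i:[0,\infty)\to\mathbb{R}$ such that: (1) $\gamma_i(0)=x_i$ and $\dot\gamma_i(0+)=v_i$; (2) (stickiness) if $\gamma_i(s)=\gamma_j(s)$ then $\gamma_i(t)=\gamma_j(t)$ for all $t\ge s$; (3) (conservation of momentum) if $\gamma_{i_1}(t)=\cdots=\gamma_{i_p}(t)\neq\gamma_i(t)$ for all other $i$, at some $t>0$, then $\dot\gamma_{i_q}(t+)=\frac{\sum_{k=1}^p m_{i_k}\dot\gamma_{i_k}(t-)}{\sum_{k=1}^p m_{i_k}}$ for each $q$. Here $\dot\gamma(t\pm)$ denotes one-sided derivatives. The convex envelope of $f$ is $\sup\{g\le f: g \text{ convex}\}$. *)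

theory Defs
  imports "HOL-Analysis.Analysis"
begin

text \<open>Particles are indexed by 1..n; masses m, initial positions x, initial velocities v.\<close>

definition particle_system :: "nat \<Rightarrow> (nat \<Rightarrow> real) \<Rightarrow> (nat \<Rightarrow> real) \<Rightarrow> bool" where
  "particle_system n m x \<longleftrightarrow>
     (\<forall>i\<in>{1..n}. m i > 0) \<and> (\<forall>i\<in>{1..n}. \<forall>j\<in>{1..n}. x i < x j \<longleftrightarrow> i < j)"

definition piecewise_linear_halfline :: "(real \<Rightarrow> real) \<Rightarrow> bool" where
  "piecewise_linear_halfline g \<longleftrightarrow> continuous_on {0..} g \<and>
     (\<exists>S. finite S \<and> (\<forall>a b. 0 \<le> a \<and> a < b \<and> {a<..<b} \<inter> S = {} \<longrightarrow>
        (\<exists>c d. \<forall>t\<in>{a..b}. g t = c + d * t)))"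

text \<open>Sticky trajectories: conditions (1)-(3) of the context, plus continuity and piecewise
  linearity. Right/left one-sided derivatives are derivatives within {t..} / {..t}.\<close>
definition sticky_trajectories ::
  "nat \<Rightarrow> (nat \<Rightarrow> real) \<Rightarrow> (nat \<Rightarrow> real) \<Rightarrow> (nat \<Rightarrow> real) \<Rightarrow> (nat \<Rightarrow> real \<Rightarrow> real) \<Rightarrow> bool" where
  "sticky_trajectories n m x v \<gamma> \<longleftrightarrow>
     (\<forall>i\<in>{1..n}. piecewise_linear_halfline (\<gamma> i)) \<and>
     (\<forall>i\<in>{1..n}. \<gamma> i 0 = x i \<and> (\<gamma> i has_real_derivative v i) (at 0 within {0..})) \<and>
     (\<forall>i\<in>{1..n}. \<forall>j\<in>{1..n}. \<forall>s\<ge>0. \<gamma> i s = \<gamma> j s \<longrightarrow> (\<forall>t\<ge>s. \<gamma> i t = \<gamma> j t)) \<and>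
     (\<forall>t>0. \<forall>q\<in>{1..n}.
        let C = {k\<in>{1..n}. \<gamma> k t = \<gamma> q t} in
        \<exists>w. (\<forall>k\<in>C. (\<gamma> k has_real_derivative w k) (at t within {..t})) \<and>
            (\<gamma> q has_real_derivative ((\<Sum>k\<in>C. m k * w k) / (\<Sum>k\<in>C. m k))) (at t within {t..}))"

text \<open>Cumulative mass and momentum: P_k = (cmass k, cmom k).\<close>
definition cmass :: "(nat \<Rightarrow> real) \<Rightarrow> nat \<Rightarrow> real" where
  "cmass m k = (\<Sum>i=1..k. m i)"

definition cmom :: "(nat \<Rightarrow> real) \<Rightarrow> (nat \<Rightarrow> real) \<Rightarrow> nat \<Rightarrow> real" where
  "cmom m v k = (\<Sum>i=1..k. m i * v i)"

text \<open>The continuous piecewise linear function whose graph is the union of the segments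
  [P_(k-1), P_k]: on [cmass (k-1), cmass k] it has slope v k. Written in closed form:
  each segment i contributes v i times the portion of [cmass (i-1), cmass i] lying left of s.\<close>
definition polygon_fn :: "nat \<Rightarrow> (nat \<Rightarrow> real) \<Rightarrow> (nat \<Rightarrow> real) \<Rightarrow> real \<Rightarrow> real" where
  "polygon_fn n m v s = (\<Sum>i=1..n. v i * max 0 (min (m i) (s - cmass m (i - 1))))"

definition convex_envelope :: "real set \<Rightarrow> (real \<Rightarrow> real) \<Rightarrow> real \<Rightarrow> real" where
  "convex_envelope D f s = Sup {g s |g. convex_on D g \<and> (\<forall>u\<in>D. g u \<le> f u)}"

definition contact_indices :: "nat \<Rightarrow> (nat \<Rightarrow> real) \<Rightarrow> (nat \<Rightarrow> real) \<Rightarrow> nat set" where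
  "contact_indices n m v =
     {k\<in>{0..n}. convex_envelope {0..cmass m n} (polygon_fn n m v) (cmass m k) = cmom m v k}"

definition kseq :: "nat \<Rightarrow> (nat \<Rightarrow> real) \<Rightarrow> (nat \<Rightarrow> real) \<Rightarrow> nat list" where
  "kseq n m v = sorted_list_of_set (contact_indices n m v)"

definition nblocks :: "nat \<Rightarrow> (nat \<Rightarrow> real) \<Rightarrow> (nat \<Rightarrow> real) \<Rightarrow> nat" where
  "nblocks n m v = length (kseq n m v) - 1"

definition block :: "nat \<Rightarrow> (nat \<Rightarrow> real) \<Rightarrow> (nat \<Rightarrow> real) \<Rightarrow> nat \<Rightarrow> nat set" where
  "block n m v j = {i. kseq n m v ! (j - 1) < i \<and> i \<le> kseq n m v ! j}"

end

theory Submission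
  imports Defs
begin

lemma slope_unique:
  fixes f :: "real \<Rightarrow> real"
  assumes "(f has_real_derivative D) (at x within T)" "at x within T \<noteq> bot"
    "eventually (\<lambda>y. f y - f x = e*(y-x)) (at x within T)"
  shows "D = e"
proof -
  have 1: "((\<lambda>y. (f y - f x)/(y-x)) \<longlongrightarrow> D) (at x within T)"
    using assms(1) has_field_derivative_iff by blast
  have "eventually (\<lambda>y. y \<noteq> x) (at x within T)" by (simp add: eventually_at_filter)
  with assms(3) have "eventually (\<lambda>y. (f y - f x)/(y-x) = e) (at x within T)"
    by eventually_elim simp
  then have "((\<lambda>y. (f y - f x)/(y-x)) \<longlongrightarrow> e) (at x within T)"
    by (rule tendsto_eventually)
  with 1 assms(2) show ?thesis using tendsto_unique by blast
qed

lemma propagate: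
  fixes \<psi> :: "real \<Rightarrow> real" and S :: "real set"
  assumes fin: "finite S" and tau: "\<tau> > 0"
  and aff: "\<And>a b. 0 \<le> a \<Longrightarrow> a < b \<Longrightarrow> {a<..<b} \<inter> S = {} \<Longrightarrow> \<exists>c d. \<forall>u\<in>{a..b}. \<psi> u = c + d*u"
  and z: "\<psi> 0 = 0"
  and d0: "(\<psi> has_real_derivative 0) (at 0 within {0..})"
  and ds: "\<And>s. 0 < s \<Longrightarrow> s < \<tau> \<Longrightarrow> \<exists>D. (\<psi> has_real_derivative D) (at s within {..s}) \<and> (\<psi> has_real_derivative D) (at s within {s..})"
  shows "\<psi> \<tau> = 0"
proof -
  define A where "A = {s\<in>{0..\<tau>}. \<forall>u\<in>{0..s}. \<psi> u = 0}"
  define \<sigma> where "\<sigma> = Sup A"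
  have A0: "0 \<in> A" using z tau by (auto simp: A_def)
  have bdd: "bdd_above A" unfolding A_def by (rule bdd_aboveI[of _ \<tau>]) auto
  have s0: "0 \<le> \<sigma>" unfolding \<sigma>_def using A0 bdd by (meson cSup_upper)
  have st: "\<sigma> \<le> \<tau>" unfolding \<sigma>_def using A0 by (intro cSup_least) (auto simp: A_def)
  have i: "\<psi> u = 0" if "0 \<le> u" "u < \<sigma>" for u
  proof -
    obtain s where "s \<in> A" "u < s" using \<open>u < \<sigma>\<close> A0 bdd unfolding \<sigma>_def
      using less_cSupD[of A u] by auto
    then show ?thesis using that by (auto simp: A_def)
  qed
  obtain \<delta> where dpos: "\<delta> > 0" and dav: "\<forall>x\<in>S. x \<noteq> \<sigma> \<longrightarrow> \<delta> \<le> dist \<sigma> x"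
    using finite_set_avoid[OF fin] by blast
  have left0: "\<psi> u = 0" if "\<sigma> > 0" "max 0 (\<sigma> - \<delta>) \<le> u" "u \<le> \<sigma>" for u
  proof -
    define a where "a = max 0 (\<sigma> - \<delta>)"
    have "a < \<sigma>" using that dpos by (auto simp: a_def)
    moreover have "{a<..<\<sigma>} \<inter> S = {}"
      using dav by (force simp: a_def dist_real_def)
    ultimately obtain c d where cd: "\<forall>u\<in>{a..\<sigma>}. \<psi> u = c + d*u"
      using aff[of a \<sigma>] by (auto simp: a_def)
    have e1: "c + d*a = 0" using cd i[of a] \<open>a < \<sigma>\<close> by (auto simp: a_def)
    moreover have e2: "c + d*((a+\<sigma>)/2) = 0" using cd i[of "(a+\<sigma>)/2"] \<open>a < \<sigma>\<close> by (auto simp: a_def)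
    have "(\<sigma> - a) * d = 2 * (c + d*((a+\<sigma>)/2)) - 2 * (c + d*a)" by (simp add: algebra_simps)
    then have "(\<sigma> - a) * d = 0" using e1 e2 by simp
    then have dd: "d = 0" using \<open>a < \<sigma>\<close> by simp
    have cc: "c = 0" using e1 dd by simp
    show ?thesis using cd that dd cc by (auto simp: a_def)
  qed
  have ii: "\<psi> \<sigma> = 0"
    using left0[of \<sigma>] z dpos s0 by (cases "\<sigma> = 0") auto
  have "\<not> \<sigma> < \<tau>"
  proof
    assume lt: "\<sigma> < \<tau>"
    define b where "b = min (\<sigma> + \<delta>) \<tau>"
    have "\<sigma> < b" using lt dpos by (auto simp: b_def)
    moreover have "{\<sigma><..<b} \<inter> S = {}"
      using dav by (force simp: b_def dist_real_def)
    ultimately obtain c d where cd: "\<forall>u\<in>{\<sigma>..b}. \<psi> u = c + d*u"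
      using aff[of \<sigma> b] s0 by auto
    have ev: "eventually (\<lambda>y. \<psi> y - \<psi> \<sigma> = d*(y-\<sigma>)) (at_right \<sigma>)"
      using eventually_at_right_real[OF \<open>\<sigma> < b\<close>]
      by eventually_elim (use cd in \<open>auto simp: algebra_simps\<close>)
    have d0': "d = 0"
    proof (cases "\<sigma> = 0")
      case True
      have sub: "{0<..} \<subseteq> {0::real..}" by auto
      have "(\<psi> has_real_derivative 0) (at \<sigma> within {\<sigma><..})"
        using DERIV_subset[OF d0 sub] True by simp
      from slope_unique[OF this _ ev] show ?thesis by simp
    next
      case False
      then have sp: "\<sigma> > 0" using s0 by simp
      obtain D where D1: "(\<psi> has_real_derivative D) (at \<sigma> within {..\<sigma>})"
        and D2: "(\<psi> has_real_derivative D) (at \<sigma> within {\<sigma>..})"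
        using ds[OF sp lt] by blast
      have "(\<psi> has_real_derivative D) (at \<sigma> within {\<sigma><..})"
        using DERIV_subset[OF D2, of "{\<sigma><..}"] by (simp add: subset_eq)
      from slope_unique[OF this _ ev] have "D = d" by simp
      have "(\<psi> has_real_derivative D) (at \<sigma> within {..<\<sigma>})"
        using DERIV_subset[OF D1, of "{..<\<sigma>}"] by (simp add: subset_eq)
      moreover have "eventually (\<lambda>y. \<psi> y - \<psi> \<sigma> = 0*(y-\<sigma>)) (at_left \<sigma>)"
        using eventually_at_left_real[of "max 0 (\<sigma> - \<delta>)" \<sigma>] sp dpos
        by (auto elim!: eventually_mono intro: left0 simp: ii)
      ultimately have "D = 0" using slope_unique by auto
      with \<open>D = d\<close> show ?thesis by simp
    qed
    have "b \<in> A"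
      unfolding A_def
    proof (safe)
      show "b \<in> {0..\<tau>}" using \<open>\<sigma> < b\<close> s0 by (auto simp: b_def)
    next
      fix u assume u: "u \<in> {0..b}"
      show "\<psi> u = 0"
      proof (cases "u < \<sigma>")
        case True then show ?thesis using i u by auto
      next
        case False
        then have "\<psi> u = c + d*u" using cd u by auto
        moreover have "\<psi> \<sigma> = c + d*\<sigma>" using cd \<open>\<sigma> < b\<close> by auto
        ultimately show ?thesis using ii d0' by simp
      qed
    qed
    then have "b \<le> \<sigma>" unfolding \<sigma>_def using bdd by (rule cSup_upper)
    with \<open>\<sigma> < b\<close> show False by simp
  qed
  with st have "\<sigma> = \<tau>" by simp
  with ii show ?thesis by simp
qed

lemma cmass_Suc: "cmass m (Suc k) = cmass m k + m (Suc k)"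
  by (simp add: cmass_def)
lemma cmom_Suc: "cmom m v (Suc k) = cmom m v k + m (Suc k) * v (Suc k)"
  by (simp add: cmom_def)
lemma cmass_0: "cmass m 0 = 0" by (simp add: cmass_def)
lemma cmom_0: "cmom m v 0 = 0" by (simp add: cmom_def)

lemma cmass_mono:
  assumes pos: "\<forall>i\<in>{1..n}. m i > 0" and "j \<le> l" "l \<le> n"
  shows "cmass m j \<le> cmass m l"
  using assms(2,3)
proof (induction l)
  case 0 then show ?case by simp
next
  case (Suc l)
  show ?case
  proof (cases "j = Suc l")
    case False
    then have "cmass m j \<le> cmass m l" using Suc by simp
    moreover have "m (Suc l) > 0" using pos Suc.prems by auto
    ultimately show ?thesis by (simp add: cmass_Suc)
  qed simp
qed

lemma cmass_strict:
  assumes pos: "\<forall>i\<in>{1..n}. m i > 0" and "j < l" "l \<le> n"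
  shows "cmass m j < cmass m l"
proof -
  obtain l' where l: "l = Suc l'" using assms(2) by (cases l) auto
  have "cmass m j \<le> cmass m l'" using cmass_mono[OF pos, of j l'] assms l by simp
  moreover have "m l > 0" using pos assms l by auto
  ultimately show ?thesis using l by (simp add: cmass_Suc)
qed

lemma cmass_nonneg:
  assumes pos: "\<forall>i\<in>{1..n}. m i > 0" and "l \<le> n"
  shows "0 \<le> cmass m l"
  using cmass_mono[OF pos, of 0 l] assms by (simp add: cmass_0)

lemma poly_at:
  assumes pos: "\<forall>i\<in>{1..n}. m i > 0" and kn: "k \<le> n"
  shows "polygon_fn n m v (cmass m k) = cmom m v k"
proof -
  have "polygon_fn n m v (cmass m k) = (\<Sum>i=1..n. if i \<le> k then m i * v i else 0)"
    unfolding polygon_fn_def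
  proof (rule sum.cong)
    fix i assume i: "i \<in> {1..n}"
    show "v i * max 0 (min (m i) (cmass m k - cmass m (i - 1))) = (if i \<le> k then m i * v i else 0)"
    proof (cases "i \<le> k")
      case True
      have "cmass m i \<le> cmass m k" using cmass_mono[OF pos True kn] .
      moreover have "cmass m i = cmass m (i-1) + m i" using i cmass_Suc[of m "i-1"] by simp
      moreover have "m i > 0" using pos i by blast
      ultimately show ?thesis using True by (auto simp: min_def max_def)
    next
      case False
      have "cmass m k \<le> cmass m (i-1)" using cmass_mono[OF pos, of k "i-1"] False i by auto
      then show ?thesis using False by (auto simp: min_def max_def)
    qed
  qed simp
  also have "\<dots> = (\<Sum>i\<in>{1..n} \<inter> {..k}. m i * v i)"
  proof -
    have "(\<Sum>i\<in>{1..n} \<inter> {..k}. m i * v i) = (\<Sum>i=1..n. if i \<in> {..k} then m i * v i else 0)"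
      by (rule sum.inter_restrict) simp
    then show ?thesis by simp
  qed
  also have "{1..n} \<inter> {..k} = {1..k}" using kn by auto
  finally show ?thesis by (simp add: cmom_def)
qed

lemma poly_bound:
  assumes pos: "\<forall>i\<in>{1..n}. m i > 0"
  shows "- (\<Sum>i=1..n. \<bar>v i\<bar> * m i) \<le> polygon_fn n m v s"
proof -
  have "(\<Sum>i=1..n. - (\<bar>v i\<bar> * m i)) \<le> polygon_fn n m v s"
    unfolding polygon_fn_def
  proof (rule sum_mono)
    fix i assume i: "i \<in> {1..n}"
    define y where "y = max 0 (min (m i) (s - cmass m (i - 1)))"
    have "m i > 0" using pos i by blast
    then have "0 \<le> y" "y \<le> m i" by (auto simp: y_def)
    then have "\<bar>v i * y\<bar> \<le> \<bar>v i\<bar> * m i" by (simp add: abs_mult mult_left_mono)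
    then show "- (\<bar>v i\<bar> * m i) \<le> v i * max 0 (min (m i) (s - cmass m (i - 1)))"
      unfolding y_def[symmetric] by linarith
  qed
  then show ?thesis by (simp add: sum_negf)
qed

lemma three_point:
  assumes pos: "\<forall>i\<in>{1..n}. m i > 0" and kc: "k \<in> contact_indices n m v"
    and ik: "i < k" and kj: "k < j" and jn: "j \<le> n"
  shows "(cmom m v k - cmom m v i) * (cmass m j - cmass m k) \<le> (cmom m v j - cmom m v k) * (cmass m k - cmass m i)"
proof -
  define D where "D = {0..cmass m n}"
  define f where "f = polygon_fn n m v"
  define Mi where "Mi = cmass m i"
  define Mj where "Mj = cmass m j"
  define Mk where "Mk = cmass m k"
  have ij: "Mi < Mk" "Mk < Mj" using cmass_strict[OF pos] ik kj jn by (auto simp: Mi_def Mj_def Mk_def)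
  have inD: "Mi \<in> D" "Mj \<in> D"
    using cmass_nonneg[OF pos] cmass_mono[OF pos] ik kj jn by (auto simp: D_def Mi_def Mj_def)
  define t where "t = (Mk - Mi) / (Mj - Mi)"
  have t01: "0 \<le> t" "t \<le> 1" using ij by (auto simp: t_def field_simps)
  have tt: "t * (Mj - Mi) = Mk - Mi" using ij by (simp add: t_def)
  have comb: "(1 - t) *\<^sub>R Mi + t *\<^sub>R Mj = Mk"
  proof -
    have "(1 - t) *\<^sub>R Mi + t *\<^sub>R Mj = Mi + t * (Mj - Mi)" by (simp add: algebra_simps)
    then show ?thesis using tt by simp
  qed
  define G where "G = {g Mk |g. convex_on D g \<and> (\<forall>u\<in>D. g u \<le> f u)}"
  have "(\<lambda>_. - (\<Sum>i=1..n. \<bar>v i\<bar> * m i)) Mk \<in> G"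
    unfolding G_def using poly_bound[OF pos] by (auto simp: f_def convex_on_const D_def)
  then have Gne: "G \<noteq> {}" by auto
  have "Sup G \<le> (1 - t) * f Mi + t * f Mj"
  proof (rule cSup_least[OF Gne])
    fix y assume "y \<in> G"
    then obtain g where y: "y = g Mk" and g: "convex_on D g" "\<forall>u\<in>D. g u \<le> f u"
      unfolding G_def by auto
    have "g Mk \<le> (1 - t) * g Mi + t * g Mj"
      using convex_onD[OF g(1) t01 inD] comb by simp
    also have "\<dots> \<le> (1 - t) * f Mi + t * f Mj"
      using g(2) inD t01 by (intro add_mono mult_left_mono) auto
    finally show "y \<le> (1 - t) * f Mi + t * f Mj" using y by simp
  qed
  moreover have "Sup G = cmom m v k"
    using kc unfolding contact_indices_def convex_envelope_def G_def D_def f_def Mk_def by auto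
  moreover have "f Mi = cmom m v i" "f Mj = cmom m v j"
    using poly_at[OF pos] ik kj jn by (auto simp: f_def Mi_def Mj_def)
  ultimately have le: "cmom m v k \<le> (1 - t) * cmom m v i + t * cmom m v j" by simp
  have "(Mj - Mi) * cmom m v k \<le> (Mj - Mi) * ((1 - t) * cmom m v i + t * cmom m v j)"
    using le ij by (intro mult_left_mono) auto
  also have "\<dots> = (Mj - Mi) * cmom m v i - (t * (Mj - Mi)) * cmom m v i + (t * (Mj - Mi)) * cmom m v j"
    by (simp add: algebra_simps)
  also have "\<dots> = (Mj - Mk) * cmom m v i + (Mk - Mi) * cmom m v j"
    unfolding tt by (simp add: algebra_simps)
  finally have "(Mj - Mi) * cmom m v k \<le> (Mj - Mk) * cmom m v i + (Mk - Mi) * cmom m v j" .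
  then show ?thesis unfolding Mi_def[symmetric] Mj_def[symmetric] Mk_def[symmetric]
    by (simp add: algebra_simps)
qed

lemma cluster_sum:
  fixes G :: "'a set" and C :: "'a \<Rightarrow> 'a set" and m L :: "'a \<Rightarrow> real"
  assumes fin: "finite G" and sub: "\<forall>q\<in>G. C q \<subseteq> G" and self: "\<forall>q\<in>G. q \<in> C q"
    and eqv: "\<forall>q\<in>G. \<forall>k\<in>G. k \<in> C q \<longleftrightarrow> C k = C q"
    and pos: "\<forall>q\<in>G. m q > 0"
  shows "(\<Sum>q\<in>G. m q * ((\<Sum>k\<in>C q. m k * L k) / (\<Sum>k\<in>C q. m k))) = (\<Sum>k\<in>G. m k * L k)"
proof -
  have "(\<Sum>q\<in>G. m q * ((\<Sum>k\<in>C q. m k * L k) / (\<Sum>k\<in>C q. m k)))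
      = (\<Sum>q\<in>G. \<Sum>k\<in>G. if k \<in> C q then m q * (m k * L k) / (\<Sum>j\<in>C q. m j) else 0)"
  proof (rule sum.cong[OF refl])
    fix q assume q: "q \<in> G"
    have "(\<Sum>k\<in>G. if k \<in> C q then m q * (m k * L k) / (\<Sum>j\<in>C q. m j) else 0)
        = (\<Sum>k\<in>G \<inter> C q. m q * (m k * L k) / (\<Sum>j\<in>C q. m j))"
      by (rule sum.inter_restrict[symmetric]) (rule fin)
    also have "G \<inter> C q = C q" using sub q by auto
    finally show "m q * ((\<Sum>k\<in>C q. m k * L k) / (\<Sum>k\<in>C q. m k)) =
        (\<Sum>k\<in>G. if k \<in> C q then m q * (m k * L k) / (\<Sum>j\<in>C q. m j) else 0)"
      by (simp add: sum_divide_distrib sum_distrib_left)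
  qed
  also have "\<dots> = (\<Sum>k\<in>G. \<Sum>q\<in>G. if k \<in> C q then m q * (m k * L k) / (\<Sum>j\<in>C q. m j) else 0)"
    by (rule sum.swap)
  also have "\<dots> = (\<Sum>k\<in>G. m k * L k)"
  proof (rule sum.cong[OF refl])
    fix k assume k: "k \<in> G"
    have "(\<Sum>q\<in>G. if k \<in> C q then m q * (m k * L k) / (\<Sum>j\<in>C q. m j) else 0)
        = (\<Sum>q\<in>G. if q \<in> C k then m q * (m k * L k) / (\<Sum>j\<in>C k. m j) else 0)"
      using eqv k by (intro sum.cong[OF refl]) auto
    also have "\<dots> = (\<Sum>q\<in>G \<inter> C k. m q * (m k * L k) / (\<Sum>j\<in>C k. m j))"
      by (rule sum.inter_restrict[symmetric]) (rule fin)
    also have "G \<inter> C k = C k" using sub k by auto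
    also have "(\<Sum>q\<in>C k. m q * (m k * L k) / (\<Sum>j\<in>C k. m j)) = (\<Sum>q\<in>C k. m q) * (m k * L k) / (\<Sum>j\<in>C k. m j)"
      by (simp only: sum_distrib_right sum_divide_distrib)
    also have "(\<Sum>j\<in>C k. m j) > 0"
    proof -
      have "finite (C k)" using sub k fin finite_subset by blast
      moreover have "\<forall>j\<in>C k. m j > 0" using sub k pos by blast
      ultimately show ?thesis using self k by (intro sum_pos) auto
    qed
    then have "(\<Sum>q\<in>C k. m q) * (m k * L k) / (\<Sum>j\<in>C k. m j) = m k * L k" by simp
    finally show "(\<Sum>q\<in>G. if k \<in> C q then m q * (m k * L k) / (\<Sum>j\<in>C q. m j) else 0) = m k * L k" by simp
  qed
  finally show ?thesis .
qed

lemma deriv_left_unique: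
  fixes f :: "real \<Rightarrow> real"
  assumes "(f has_real_derivative a) (at s within {..s})" "(f has_real_derivative b) (at s within {..s})"
  shows "a = b"
proof -
  have sub: "{..<s} \<subseteq> {..s}" by auto
  have "((\<lambda>y. (f y - f s)/(y-s)) \<longlongrightarrow> a) (at_left s)" "((\<lambda>y. (f y - f s)/(y-s)) \<longlongrightarrow> b) (at_left s)"
    using DERIV_subset[OF assms(1) sub] DERIV_subset[OF assms(2) sub] has_field_derivative_iff by blast+
  then show ?thesis using tendsto_unique trivial_limit_at_left_real by blast
qed

lemma order_traj:
  assumes ps: "particle_system n m x" and st: "sticky_trajectories n m x v \<gamma>"
    and ij: "i \<le> j" and i: "i \<in> {1..n}" and j: "j \<in> {1..n}" and t: "t \<ge> 0"
  shows "\<gamma> i t \<le> \<gamma> j t"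
proof (rule ccontr)
  assume neg: "\<not> \<gamma> i t \<le> \<gamma> j t"
  then have "i \<noteq> j" by auto
  with ij have "i < j" by simp
  then have x: "x i < x j" using ps i j by (auto simp: particle_system_def)
  have g0: "\<gamma> i 0 = x i" "\<gamma> j 0 = x j" using st i j by (auto simp: sticky_trajectories_def)
  have ci: "continuous_on {0..} (\<gamma> i)" "continuous_on {0..} (\<gamma> j)"
    using st i j by (auto simp: sticky_trajectories_def piecewise_linear_halfline_def)
  have "continuous_on {0..t} (\<lambda>s. \<gamma> j s - \<gamma> i s)"
    using ci by (intro continuous_intros) (auto elim: continuous_on_subset)
  moreover have "(\<lambda>s. \<gamma> j s - \<gamma> i s) t \<le> 0" using neg by simp
  moreover have "0 \<le> (\<lambda>s. \<gamma> j s - \<gamma> i s) 0" using x g0 by simp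
  ultimately have "\<exists>u. 0 \<le> u \<and> u \<le> t \<and> (\<lambda>s. \<gamma> j s - \<gamma> i s) u = 0"
    using IVT2'[of "\<lambda>s. \<gamma> j s - \<gamma> i s" t 0 0] t by blast
  then obtain u where u: "0 \<le> u" "u \<le> t" "\<gamma> j u - \<gamma> i u = 0" by blast
  have stk: "\<forall>s\<ge>0. \<gamma> i s = \<gamma> j s \<longrightarrow> (\<forall>t\<ge>s. \<gamma> i t = \<gamma> j t)"
    using st i j unfolding sticky_trajectories_def by blast
  have "\<gamma> i u = \<gamma> j u" using u(3) by simp
  then have "\<gamma> i t = \<gamma> j t" using stk[rule_format, of u t] u(1,2) by blast
  with neg show False by simp
qed

lemma deriv_psi:
  fixes \<gamma> :: "nat \<Rightarrow> real \<Rightarrow> real"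
  assumes fin: "finite G" and d: "\<forall>i\<in>G. (\<gamma> i has_real_derivative D i) (at y within T)"
  shows "((\<lambda>u. (\<Sum>i\<in>G. m i * \<gamma> i u) - X - u * V) has_real_derivative ((\<Sum>i\<in>G. m i * D i) - V)) (at y within T)"
proof -
  have h1: "((\<lambda>u. \<Sum>i\<in>G. m i * \<gamma> i u) has_real_derivative (\<Sum>i\<in>G. m i * D i)) (at y within T)"
    by (rule DERIV_sum) (use d in \<open>blast intro: DERIV_cmult\<close>)
  have h2: "((\<lambda>u. (\<Sum>i\<in>G. m i * \<gamma> i u) - X) has_real_derivative (\<Sum>i\<in>G. m i * D i) - 0) (at y within T)"
    by (rule DERIV_diff[OF h1 DERIV_const])
  have h3: "((\<lambda>u. u * V) has_real_derivative 1 * V) (at y within T)"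
    by (rule DERIV_cmult_right[OF DERIV_ident])
  show ?thesis using DERIV_diff[OF h2 h3] by simp
qed

lemma momentum:
  assumes ps: "particle_system n m x" and st: "sticky_trajectories n m x v \<gamma>"
    and G: "G \<subseteq> {1..n}" and tau: "\<tau> > 0"
    and iso: "\<And>s i k. 0 < s \<Longrightarrow> s < \<tau> \<Longrightarrow> i \<in> G \<Longrightarrow> k \<in> {1..n} \<Longrightarrow> \<gamma> k s = \<gamma> i s \<Longrightarrow> k \<in> G"
  shows "(\<Sum>i\<in>G. m i * \<gamma> i \<tau>) = (\<Sum>i\<in>G. m i * x i) + \<tau> * (\<Sum>i\<in>G. m i * v i)"
proof -
  define X where "X = (\<Sum>i\<in>G. m i * x i)"
  define V where "V = (\<Sum>i\<in>G. m i * v i)"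
  define \<psi> where "\<psi> u = (\<Sum>i\<in>G. m i * \<gamma> i u) - X - u * V" for u
  have finG: "finite G" using G finite_subset by blast
  have pos: "\<forall>i\<in>G. m i > 0" using ps G by (auto simp: particle_system_def)
  note stu = st[unfolded sticky_trajectories_def]
  have st1: "\<forall>i\<in>{1..n}. piecewise_linear_halfline (\<gamma> i)"
    using stu by (rule conjunct1)
  have st2: "\<forall>i\<in>{1..n}. \<gamma> i 0 = x i \<and> (\<gamma> i has_real_derivative v i) (at 0 within {0..})"
    using stu[THEN conjunct2] by (rule conjunct1)
  have coll: "\<forall>t>0. \<forall>q\<in>{1..n}.
        let C = {k\<in>{1..n}. \<gamma> k t = \<gamma> q t} in
        \<exists>w. (\<forall>k\<in>C. (\<gamma> k has_real_derivative w k) (at t within {..t})) \<and>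
            (\<gamma> q has_real_derivative ((\<Sum>k\<in>C. m k * w k) / (\<Sum>k\<in>C. m k))) (at t within {t..})"
    using stu[THEN conjunct2, THEN conjunct2, THEN conjunct2] .
  have pw: "\<forall>i\<in>G. piecewise_linear_halfline (\<gamma> i)" using st1 G by blast
  have init: "\<forall>i\<in>G. \<gamma> i 0 = x i \<and> (\<gamma> i has_real_derivative v i) (at 0 within {0..})"
    using st2 G by blast
  have "\<forall>i\<in>G. \<exists>S. finite S \<and> (\<forall>a b. 0 \<le> a \<and> a < b \<and> {a<..<b} \<inter> S = {} \<longrightarrow>
        (\<exists>c d. \<forall>t\<in>{a..b}. \<gamma> i t = c + d * t))"
    using pw unfolding piecewise_linear_halfline_def by blast
  from bchoice[OF this] obtain SS where SS: "\<forall>i\<in>G. finite (SS i) \<and> (\<forall>a b. 0 \<le> a \<and> a < b \<and> {a<..<b} \<inter> SS i = {} \<longrightarrow>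
        (\<exists>c d. \<forall>t\<in>{a..b}. \<gamma> i t = c + d * t))" ..
  define S where "S = (\<Union>i\<in>G. SS i)"
  have finS: "finite S" using SS finG by (auto simp: S_def)
  have aff: "\<exists>c d. \<forall>u\<in>{a..b}. \<psi> u = c + d*u" if ab: "0 \<le> a" "a < b" "{a<..<b} \<inter> S = {}" for a b
  proof -
    have "\<forall>i\<in>G. \<exists>p. \<forall>t\<in>{a..b}. \<gamma> i t = fst p + snd p * t"
    proof
      fix i assume i: "i \<in> G"
      have "{a<..<b} \<inter> SS i = {}" using ab(3) i by (auto simp: S_def)
      moreover have SSi: "\<forall>a b. 0 \<le> a \<and> a < b \<and> {a<..<b} \<inter> SS i = {} \<longrightarrow>
        (\<exists>c d. \<forall>t\<in>{a..b}. \<gamma> i t = c + d * t)" using SS i by blast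
      ultimately obtain c d where "\<forall>t\<in>{a..b}. \<gamma> i t = c + d * t" using ab(1,2) by blast
      then show "\<exists>p. \<forall>t\<in>{a..b}. \<gamma> i t = fst p + snd p * t" by (intro exI[of _ "(c,d)"]) simp
    qed
    from bchoice[OF this] obtain cd where cd: "\<forall>i\<in>G. \<forall>t\<in>{a..b}. \<gamma> i t = fst (cd i) + snd (cd i) * t" ..
    show ?thesis
    proof (intro exI ballI)
      fix u assume u: "u \<in> {a..b}"
      have "\<psi> u = (\<Sum>i\<in>G. m i * (fst (cd i) + snd (cd i) * u)) - X - u * V"
        unfolding \<psi>_def using cd u by (intro arg_cong2[where f="(-)"] sum.cong) auto
      also have "\<dots> = ((\<Sum>i\<in>G. m i * fst (cd i)) - X) + ((\<Sum>i\<in>G. m i * snd (cd i)) - V) * u"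
        by (simp add: algebra_simps sum.distrib sum_distrib_left sum_distrib_right)
      finally show "\<psi> u = ((\<Sum>i\<in>G. m i * fst (cd i)) - X) + ((\<Sum>i\<in>G. m i * snd (cd i)) - V) * u" .
    qed
  qed
  have z: "\<psi> 0 = 0" using init unfolding \<psi>_def X_def by simp
  have d0: "(\<psi> has_real_derivative 0) (at 0 within {0..})"
  proof -
    have "(\<psi> has_real_derivative ((\<Sum>i\<in>G. m i * v i) - V)) (at 0 within {0..})"
      unfolding \<psi>_def[abs_def] using init by (intro deriv_psi finG) auto
    then show ?thesis by (simp add: V_def)
  qed
  have ds: "\<exists>D. (\<psi> has_real_derivative D) (at s within {..s}) \<and> (\<psi> has_real_derivative D) (at s within {s..})"
    if s: "0 < s" "s < \<tau>" for s
  proof -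
    define C where "C q = {k\<in>{1..n}. \<gamma> k s = \<gamma> q s}" for q
    have "\<forall>q\<in>G. \<exists>w. (\<forall>k\<in>C q. (\<gamma> k has_real_derivative w k) (at s within {..s})) \<and>
            (\<gamma> q has_real_derivative ((\<Sum>k\<in>C q. m k * w k) / (\<Sum>k\<in>C q. m k))) (at s within {s..})"
    proof
      fix q assume "q \<in> G"
      then have "q \<in> {1..n}" using G by auto
      then show "\<exists>w. (\<forall>k\<in>C q. (\<gamma> k has_real_derivative w k) (at s within {..s})) \<and>
            (\<gamma> q has_real_derivative ((\<Sum>k\<in>C q. m k * w k) / (\<Sum>k\<in>C q. m k))) (at s within {s..})"
        using coll s(1) unfolding C_def Let_def by blast
    qed
    from bchoice[OF this] obtain W where W: "\<forall>q\<in>G. (\<forall>k\<in>C q. (\<gamma> k has_real_derivative W q k) (at s within {..s})) \<and>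
            (\<gamma> q has_real_derivative ((\<Sum>k\<in>C q. m k * W q k) / (\<Sum>k\<in>C q. m k))) (at s within {s..})" ..
    define L where "L k = W k k" for k
    have selfC: "\<forall>q\<in>G. q \<in> C q" using G by (auto simp: C_def)
    have subC: "\<forall>q\<in>G. C q \<subseteq> G" using iso s by (auto simp: C_def)
    have Lk: "\<forall>k\<in>G. (\<gamma> k has_real_derivative L k) (at s within {..s})"
      using W selfC by (auto simp: L_def)
    have WL: "W q k = L k" if "q \<in> G" "k \<in> C q" for q k
    proof -
      have "k \<in> G" using subC that by blast
      then show ?thesis using deriv_left_unique W Lk that by blast
    qed
    have Rq: "\<forall>q\<in>G. (\<gamma> q has_real_derivative ((\<Sum>k\<in>C q. m k * L k) / (\<Sum>k\<in>C q. m k))) (at s within {s..})"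
    proof
      fix q assume q: "q \<in> G"
      have "(\<Sum>k\<in>C q. m k * W q k) = (\<Sum>k\<in>C q. m k * L k)" using WL q by (intro sum.cong) auto
      then show "(\<gamma> q has_real_derivative ((\<Sum>k\<in>C q. m k * L k) / (\<Sum>k\<in>C q. m k))) (at s within {s..})"
        using W q by metis
    qed
    have eqv: "\<forall>q\<in>G. \<forall>k\<in>G. k \<in> C q \<longleftrightarrow> C k = C q"
    proof (intro ballI iffI)
      fix q k assume "q \<in> G" "k \<in> G" "k \<in> C q"
      then show "C k = C q" by (auto simp: C_def)
    next
      fix q k assume "q \<in> G" "k \<in> G" "C k = C q"
      moreover have "k \<in> C k" using selfC \<open>k \<in> G\<close> by blast
      ultimately show "k \<in> C q" by simp
    qed
    have cs: "(\<Sum>q\<in>G. m q * ((\<Sum>k\<in>C q. m k * L k) / (\<Sum>k\<in>C q. m k))) = (\<Sum>k\<in>G. m k * L k)"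
      by (rule cluster_sum[OF finG subC selfC eqv pos])
    have "(\<psi> has_real_derivative ((\<Sum>i\<in>G. m i * L i) - V)) (at s within {..s})"
      unfolding \<psi>_def[abs_def] using Lk by (intro deriv_psi finG) auto
    moreover have "(\<psi> has_real_derivative ((\<Sum>q\<in>G. m q * ((\<Sum>k\<in>C q. m k * L k) / (\<Sum>k\<in>C q. m k))) - V)) (at s within {s..})"
      unfolding \<psi>_def[abs_def] using Rq by (intro deriv_psi finG) auto
    ultimately show ?thesis unfolding cs by blast
  qed
  have "\<psi> \<tau> = 0" by (rule propagate[OF finS tau aff z d0 ds])
  then show ?thesis unfolding \<psi>_def X_def V_def by simp
qed

lemma sum_diff_ivl:
  fixes f :: "nat \<Rightarrow> real"
  assumes "j \<le> l"
  shows "(\<Sum>i=1..l. f i) - (\<Sum>i=1..j. f i) = (\<Sum>i=Suc j..l. f i)"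
  using assms
proof (induction l)
  case 0 then show ?case by simp
next
  case (Suc l)
  show ?case
  proof (cases "j = Suc l")
    case False
    then have "j \<le> l" using Suc.prems by simp
    then have "(\<Sum>i=1..l. f i) - (\<Sum>i=1..j. f i) = (\<Sum>i=Suc j..l. f i)" using Suc.IH by simp
    moreover have "(\<Sum>i=Suc j..Suc l. f i) = (\<Sum>i=Suc j..l. f i) + f (Suc l)"
      using \<open>j \<le> l\<close> by simp
    ultimately show ?thesis by simp
  qed simp
qed

lemma sep:
  assumes ps: "particle_system n m x" and st: "sticky_trajectories n m x v \<gamma>"
    and kc: "k \<in> contact_indices n m v"
    and p: "p \<in> {1..n}" and q: "q \<in> {1..n}" and pk: "p \<le> k" and kq: "k < q" and t: "t \<ge> 0"
  shows "\<gamma> p t \<noteq> \<gamma> q t"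
proof
  assume eq: "\<gamma> p t = \<gamma> q t"
  have pos: "\<forall>i\<in>{1..n}. m i > 0" using ps by (simp add: particle_system_def)
  have xlt: "\<And>i j. i \<in> {1..n} \<Longrightarrow> j \<in> {1..n} \<Longrightarrow> x i < x j \<longleftrightarrow> i < j"
    using ps by (simp add: particle_system_def)
  have k1: "k \<in> {1..n}" "Suc k \<in> {1..n}" using p q pk kq by auto
  have ord: "\<And>i j s. i \<le> j \<Longrightarrow> i \<in> {1..n} \<Longrightarrow> j \<in> {1..n} \<Longrightarrow> s \<ge> 0 \<Longrightarrow> \<gamma> i s \<le> \<gamma> j s"
    using order_traj[OF ps st] by blast
  note stu = st[unfolded sticky_trajectories_def]
  have cont: "\<forall>i\<in>{1..n}. continuous_on {0..} (\<gamma> i)"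
    using stu[THEN conjunct1] by (simp add: piecewise_linear_halfline_def)
  have init: "\<forall>i\<in>{1..n}. \<gamma> i 0 = x i"
    using stu[THEN conjunct2, THEN conjunct1] by simp
  have stick: "\<forall>i\<in>{1..n}. \<forall>j\<in>{1..n}. \<forall>s\<ge>0. \<gamma> i s = \<gamma> j s \<longrightarrow> (\<forall>t\<ge>s. \<gamma> i t = \<gamma> j t)"
    using stu[THEN conjunct2, THEN conjunct2, THEN conjunct1] .
  have "\<gamma> p t \<le> \<gamma> k t" "\<gamma> k t \<le> \<gamma> (Suc k) t" "\<gamma> (Suc k) t \<le> \<gamma> q t"
    using ord p q k1 pk kq t by auto
  then have ekt: "\<gamma> k t = \<gamma> (Suc k) t" using eq by simp
  define Z where "Z = {s \<in> {0..t}. \<gamma> (Suc k) s - \<gamma> k s = 0}"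
  have sub0: "{0..t} \<subseteq> {0::real..}" by auto
  have c1: "continuous_on {0..t} (\<gamma> k)" using continuous_on_subset[OF bspec[OF cont k1(1)] sub0] .
  have c2: "continuous_on {0..t} (\<gamma> (Suc k))" using continuous_on_subset[OF bspec[OF cont k1(2)] sub0] .
  have "continuous_on {0..t} (\<lambda>s. \<gamma> (Suc k) s - \<gamma> k s)"
    using c1 c2 by (intro continuous_intros)
  then have clZ: "closed Z" unfolding Z_def by (intro continuous_closed_preimage_constant) auto
  have tZ: "t \<in> Z" using ekt t by (simp add: Z_def)
  have bddZ: "bdd_below Z" by (rule bdd_belowI[of _ 0]) (auto simp: Z_def)
  define \<tau> where "\<tau> = Inf Z"
  have tauZ: "\<tau> \<in> Z" unfolding \<tau>_def using closed_contains_Inf[OF _ bddZ clZ] tZ by blast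
  then have tau0: "0 \<le> \<tau>" and taut: "\<tau> \<le> t" and etau: "\<gamma> k \<tau> = \<gamma> (Suc k) \<tau>" by (auto simp: Z_def)
  have "x k < x (Suc k)" using xlt k1 by simp
  then have "\<tau> \<noteq> 0" using etau init k1 by auto
  with tau0 have taupos: "\<tau> > 0" by simp
  have before: "\<gamma> k s < \<gamma> (Suc k) s" if "0 \<le> s" "s < \<tau>" for s
  proof -
    have "\<gamma> k s \<le> \<gamma> (Suc k) s" using ord k1 that by simp
    moreover have "\<gamma> k s \<noteq> \<gamma> (Suc k) s"
    proof
      assume "\<gamma> k s = \<gamma> (Suc k) s"
      then have "s \<in> Z" using that taut by (auto simp: Z_def)
      then have "\<tau> \<le> s" unfolding \<tau>_def using bddZ by (rule cInf_lower)
      with that show False by simp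
    qed
    ultimately show ?thesis by simp
  qed
  define y where "y = \<gamma> k \<tau>"
  define A where "A = {i \<in> {1..k}. \<gamma> i \<tau> = y}"
  define B where "B = {i \<in> {Suc k..n}. \<gamma> i \<tau> = y}"
  have kA: "k \<in> A" using k1 by (simp add: A_def y_def)
  have kB: "Suc k \<in> B" using k1 etau by (simp add: B_def y_def)
  define a where "a = Min A"
  define b where "b = Max B"
  have finA: "finite A" and finB: "finite B" by (auto simp: A_def B_def)
  have aA: "a \<in> A" unfolding a_def using finA kA Min_in by blast
  have bB: "b \<in> B" unfolding b_def using finB kB Max_in by blast
  have a1: "1 \<le> a" "a \<le> k" using aA by (auto simp: A_def)
  have b1: "Suc k \<le> b" "b \<le> n" using bB by (auto simp: B_def)
  define G where "G = {a..k}"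
  define H where "H = {Suc k..b}"
  have GH: "G \<subseteq> {1..n}" "H \<subseteq> {1..n}" using a1 b1 k1 by (auto simp: G_def H_def)
  have Gy: "\<gamma> i \<tau> = y" if "i \<in> G" for i
  proof -
    have "\<gamma> a \<tau> \<le> \<gamma> i \<tau>" "\<gamma> i \<tau> \<le> \<gamma> k \<tau>" using ord that GH k1 tau0 by (auto simp: G_def)
    moreover have "\<gamma> a \<tau> = y" using aA by (simp add: A_def)
    ultimately show ?thesis by (simp add: y_def)
  qed
  have Hy: "\<gamma> i \<tau> = y" if "i \<in> H" for i
  proof -
    have "\<gamma> (Suc k) \<tau> \<le> \<gamma> i \<tau>" "\<gamma> i \<tau> \<le> \<gamma> b \<tau>" using ord that GH k1 b1 tau0 by (auto simp: H_def)
    moreover have "\<gamma> b \<tau> = y" using bB by (simp add: B_def)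
    ultimately show ?thesis using etau by (simp add: y_def)
  qed
  have isoG: "k' \<in> G" if s: "0 < s" "s < \<tau>" and i: "i \<in> G" and k': "k' \<in> {1..n}" and e: "\<gamma> k' s = \<gamma> i s" for s i k'
  proof (rule ccontr)
    assume nG: "k' \<notin> G"
    show False
    proof (cases "k < k'")
      case True
      have "\<gamma> i s \<le> \<gamma> k s" using ord i GH k1 s by (auto simp: G_def)
      moreover have "\<gamma> (Suc k) s \<le> \<gamma> k' s" using ord k' k1 True s by auto
      ultimately show False using before[of s] s e by simp
    next
      case False
      then have "k' < a" using nG by (auto simp: G_def)
      have "\<gamma> k' \<tau> = \<gamma> i \<tau>"
        using stick k' i GH s e by (meson less_imp_le subsetD)
      then have "k' \<in> A" using Gy[OF i] k' \<open>k' < a\<close> a1 by (auto simp: A_def)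
      then have "a \<le> k'" unfolding a_def using finA by simp
      with \<open>k' < a\<close> show False by simp
    qed
  qed
  have isoH: "k' \<in> H" if s: "0 < s" "s < \<tau>" and i: "i \<in> H" and k': "k' \<in> {1..n}" and e: "\<gamma> k' s = \<gamma> i s" for s i k'
  proof (rule ccontr)
    assume nH: "k' \<notin> H"
    show False
    proof (cases "k' \<le> k")
      case True
      have "\<gamma> (Suc k) s \<le> \<gamma> i s" using ord i GH k1 s by (auto simp: H_def)
      moreover have "\<gamma> k' s \<le> \<gamma> k s" using ord k' k1 True s by auto
      ultimately show False using before[of s] s e by simp
    next
      case False
      then have "b < k'" using nH by (auto simp: H_def)
      have "\<gamma> k' \<tau> = \<gamma> i \<tau>"
        using stick k' i GH s e by (meson less_imp_le subsetD)
      then have "k' \<in> B" using Hy[OF i] k' \<open>b < k'\<close> b1 by (auto simp: B_def)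
      then have "k' \<le> b" unfolding b_def using finB by simp
      with \<open>b < k'\<close> show False by simp
    qed
  qed
  have momG: "(\<Sum>i\<in>G. m i * \<gamma> i \<tau>) = (\<Sum>i\<in>G. m i * x i) + \<tau> * (\<Sum>i\<in>G. m i * v i)"
    by (rule momentum[OF ps st GH(1) taupos isoG])
  have momH: "(\<Sum>i\<in>H. m i * \<gamma> i \<tau>) = (\<Sum>i\<in>H. m i * x i) + \<tau> * (\<Sum>i\<in>H. m i * v i)"
    by (rule momentum[OF ps st GH(2) taupos isoH])
  define MG where "MG = (\<Sum>i\<in>G. m i)"
  define MH where "MH = (\<Sum>i\<in>H. m i)"
  define PG where "PG = (\<Sum>i\<in>G. m i * v i)"
  define PH where "PH = (\<Sum>i\<in>H. m i * v i)"
  define XG where "XG = (\<Sum>i\<in>G. m i * x i)"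
  define XH where "XH = (\<Sum>i\<in>H. m i * x i)"
  have eG: "y * MG = XG + \<tau> * PG"
  proof -
    have "(\<Sum>i\<in>G. m i * \<gamma> i \<tau>) = (\<Sum>i\<in>G. m i * y)" using Gy by simp
    moreover have "(\<Sum>i\<in>G. m i * y) = y * MG" by (simp add: MG_def sum_distrib_left mult.commute)
    ultimately show ?thesis using momG by (simp add: XG_def PG_def)
  qed
  have eH: "y * MH = XH + \<tau> * PH"
  proof -
    have "(\<Sum>i\<in>H. m i * \<gamma> i \<tau>) = (\<Sum>i\<in>H. m i * y)" using Hy by simp
    moreover have "(\<Sum>i\<in>H. m i * y) = y * MH" by (simp add: MH_def sum_distrib_left mult.commute)
    ultimately show ?thesis using momH by (simp add: XH_def PH_def)
  qed
  have XGle: "XG \<le> MG * x k"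
  proof -
    have "XG \<le> (\<Sum>i\<in>G. m i * x k)" unfolding XG_def
    proof (rule sum_mono)
      fix i assume i: "i \<in> G"
      then have "x i \<le> x k" using xlt[of k i] GH k1 by (force simp: G_def)
      moreover have "m i > 0" using pos GH i by blast
      ultimately show "m i * x i \<le> m i * x k" by simp
    qed
    then show ?thesis by (simp add: MG_def sum_distrib_right)
  qed
  have XHge: "MH * x (Suc k) \<le> XH"
  proof -
    have "(\<Sum>i\<in>H. m i * x (Suc k)) \<le> XH" unfolding XH_def
    proof (rule sum_mono)
      fix i assume i: "i \<in> H"
      then have "x (Suc k) \<le> x i" using xlt[of i "Suc k"] GH k1 by (force simp: H_def)
      moreover have "m i > 0" using pos GH i by blast
      ultimately show "m i * x (Suc k) \<le> m i * x i" by simp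
    qed
    then show ?thesis by (simp add: MH_def sum_distrib_right)
  qed
  have MGpos: "MG > 0" unfolding MG_def using pos GH a1
    by (intro sum_pos) (auto simp: G_def)
  have MHpos: "MH > 0" unfolding MH_def using pos GH b1
    by (intro sum_pos) (auto simp: H_def)
  have Gi: "G = {Suc (a - 1)..k}" using a1 by (simp add: G_def)
  have MGc: "MG = cmass m k - cmass m (a - 1)" unfolding MG_def cmass_def Gi
    using a1 by (intro sum_diff_ivl[symmetric]) simp
  have PGc: "PG = cmom m v k - cmom m v (a - 1)" unfolding PG_def cmom_def Gi
    using a1 by (intro sum_diff_ivl[symmetric]) simp
  have MHc: "MH = cmass m b - cmass m k" unfolding MH_def cmass_def H_def
    using b1 by (intro sum_diff_ivl[symmetric]) simp
  have PHc: "PH = cmom m v b - cmom m v k" unfolding PH_def cmom_def H_def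
    using b1 by (intro sum_diff_ivl[symmetric]) simp
  have tp: "PG * MH \<le> PH * MG"
    using three_point[OF pos kc, of "a - 1" b] a1 b1 unfolding MGc PGc MHc PHc by simp
  have xk: "x k < x (Suc k)" using xlt k1 by simp
  have "y * MG * MH = XG * MH + \<tau> * (PG * MH)" using eG by (simp add: algebra_simps)
  also have "\<dots> \<le> MG * x k * MH + \<tau> * (PH * MG)"
    using XGle tp MHpos tau0 by (intro add_mono mult_right_mono mult_left_mono) auto
  finally have l1: "y * MG * MH \<le> MG * x k * MH + \<tau> * (PH * MG)" .
  have eq2: "y * MG * MH = XH * MG + \<tau> * (PH * MG)" using eH by (simp add: algebra_simps)
  have "MH * x (Suc k) * MG \<le> XH * MG"
    using XHge MGpos by (intro mult_right_mono) auto
  with eq2 have l2: "MH * x (Suc k) * MG + \<tau> * (PH * MG) \<le> y * MG * MH" by linarith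
  from l1 l2 have "(MG * MH) * x (Suc k) \<le> (MG * MH) * x k" by (simp add: algebra_simps)
  moreover have "MG * MH > 0" using MGpos MHpos by simp
  ultimately have "x (Suc k) \<le> x k" using mult_le_cancel_left_pos by blast
  with xk show False by simp
qed

lemma blocks_sep:
  assumes ps: "particle_system n m x" and st: "sticky_trajectories n m x v \<gamma>"
    and i: "i \<in> {1..nblocks n m v}" and j: "j \<in> {1..nblocks n m v}" and ij: "i < j"
    and p: "p \<in> block n m v i" and q: "q \<in> block n m v j" and t: "t \<ge> 0"
  shows "\<gamma> p t \<noteq> \<gamma> q t"
proof -
  define ks where "ks = kseq n m v"
  have finCI: "finite (contact_indices n m v)"
    by (rule finite_subset[of _ "{0..n}"]) (auto simp: contact_indices_def)
  have setks: "set ks = contact_indices n m v" and sks: "sorted ks"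
    using finCI by (auto simp: ks_def kseq_def)
  have jl: "j < length ks" using j by (auto simp: nblocks_def ks_def)
  have il: "i < length ks" using ij jl by simp
  have CIn: "\<And>c. c \<in> contact_indices n m v \<Longrightarrow> c \<le> n" by (auto simp: contact_indices_def)
  have kc: "ks ! i \<in> contact_indices n m v" using setks il nth_mem by blast
  have jc: "ks ! j \<in> contact_indices n m v" using setks jl nth_mem by blast
  have pb: "ks ! (i - 1) < p" "p \<le> ks ! i" using p by (auto simp: block_def ks_def)
  have qb: "ks ! (j - 1) < q" "q \<le> ks ! j" using q by (auto simp: block_def ks_def)
  have "ks ! i \<le> ks ! (j - 1)" using sks ij jl by (intro sorted_nth_mono) auto
  then have kq: "ks ! i < q" using qb by simp
  have pn: "p \<in> {1..n}" using pb CIn[OF kc] by auto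
  have qn: "q \<in> {1..n}" using qb CIn[OF jc] by auto
  show ?thesis by (rule sep[OF ps st kc pn qn pb(2) kq t])
qed

theorem lemma3p1:
  fixes n :: nat and m x v :: "nat \<Rightarrow> real" and \<gamma> :: "nat \<Rightarrow> real \<Rightarrow> real"
  assumes "particle_system n m x"
    and "sticky_trajectories n m x v \<gamma>"
  shows "\<forall>i\<in>{1..nblocks n m v}. \<forall>j\<in>{1..nblocks n m v}. i \<noteq> j \<longrightarrow>
           (\<forall>p\<in>block n m v i. \<forall>q\<in>block n m v j. \<forall>t\<ge>0. \<gamma> p t \<noteq> \<gamma> q t)"
proof (intro ballI impI allI)
  fix i j p q and t :: real
  assume i: "i \<in> {1..nblocks n m v}" and j: "j \<in> {1..nblocks n m v}" and ij: "i \<noteq> j"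
    and p: "p \<in> block n m v i" and q: "q \<in> block n m v j" and t: "0 \<le> t"
  show "\<gamma> p t \<noteq> \<gamma> q t"
  proof (cases "i < j")
    case True
    show ?thesis by (rule blocks_sep[OF assms i j True p q t])
  next
    case False
    then have "j < i" using ij by simp
    then have "\<gamma> q t \<noteq> \<gamma> p t" by (rule blocks_sep[OF assms j i _ q p t])
    then show ?thesis by metis
  qed
qed

end
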